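(* Consider a Fragile multi-CPR Game with $n\ge1$ players and $m=1$ CPR satisfying the Assumption below, with constraint policies $\vartheta_i$ as defined below. Then the game admits a unique Generalized Nash equilibrium.
   Context: Let $n,m\ge1$ be integers and $[k]=\{1,\dots,k\}$. Let $C_m=\{(x_1,\dots,x_m)\in[0,1]^m:\sum_{j\in[m]}x_j\le1\}$, $\mathcal{C}_n=\prod_{i\in[n]}C_m$ and $\mathcal{C}_{-i}=\prod_{[n]\setminus\{i\}}C_m$. A strategy profile is $\mathbf{x}=(\mathbf{x}_1,\dots,\mathbf{x}_n)\in\mathcal{C}_n$, $\mathbf{x}_i=(x_{i1},\dots,x_{im})$; write $\mathbf{x}=(\mathbf{x}_i,\mathbf{x}_{-i})$. Put $\mathbf{x}_T^{(j)}=\sum_{i\in[n]}x_{ij}$ and $\mathbf{x}_T^{j|i}=\sum_{\ell\ne i}x_{\ell j}$. Each CPR $j$ has a return rate $\mathcal{R}_j(t)>1$ and failure probability $p_j(t)\in[0,1]$; each player $i$ has parameters $a_i,k_i$. Effective rate: $\mathcal{F}_{ij}(t)=(\mathcal{R}_j(t)-1)^{a_i}(1-p_j(t))-k_i p_j(t)$; utility: $\mathcal{V}_i(\mathbf{x}_i;\mathbf{x}_{-i})=\sum_{j}x_{ij}^{a_i}\mathcal{F}_{ij}(\mathbf{x}_T^{(j)})$. Assumption: (1) $p_j(0)=0$, $p_j(t)=1$ for $t\ge1$; (2) $a_i\in(0,1]$, $k_i>0$; (3) each $\mathcal{F}_{ij}$ (continuous on $[0,1]$) has strictly negative first and second derivatives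 on $(0,1)$. Let $\omega_{ij}\in(0,1)$ be the unique zero of $\mathcal{F}_{ij}$ in $(0,1)$. Active CPRs: $A(\mathbf{x}_{-i})=\{j:\mathbf{x}_T^{j|i}<\omega_{ij}\}$. Constraint policy: $\vartheta_i(\mathbf{x}_{-i})=C_m\cap\big(\prod_{j\in A(\mathbf{x}_{-i})}[0,\omega_{ij}-\mathbf{x}_T^{j|i}]\times\prod_{j\in[m]\setminus A(\mathbf{x}_{-i})}\{0\}\big)$. A Generalized Nash equilibrium (GNE) is $\mathbf{x}^*\in\mathcal{C}_n$ with, for all $i$, $\mathbf{x}^*_i\in\vartheta_i(\mathbf{x}^*_{-i})$ and $\mathcal{V}_i(\mathbf{x}^*_i;\mathbf{x}^*_{-i})\ge\mathcal{V}_i(\mathbf{y};\mathbf{x}^*_{-i})$ for all $\mathbf{y}\in\vartheta_i(\mathbf{x}^*_{-i})$. *)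

theory Defs
  imports "HOL-Analysis.Analysis"
begin

text \<open>Players are indexed by {..<n}, CPRs by {..<m}.
  A strategy of a player is a function nat => real (only indices < m matter);
  a strategy profile is a function nat => nat => real (x i j = x_{ij}).
  R j, p j : return rate and failure probability of CPR j; a i, k i : player parameters.\<close>

definition eff_rate :: "(nat \<Rightarrow> real \<Rightarrow> real) \<Rightarrow> (nat \<Rightarrow> real \<Rightarrow> real) \<Rightarrow>
    (nat \<Rightarrow> real) \<Rightarrow> (nat \<Rightarrow> real) \<Rightarrow> nat \<Rightarrow> nat \<Rightarrow> real \<Rightarrow> real" where
  "eff_rate R p a k i j t = (R j t - 1) powr (a i) * (1 - p j t) - k i * p j t"

definition fragile_assumption :: "nat \<Rightarrow> nat \<Rightarrow> (nat \<Rightarrow> real \<Rightarrow> real) \<Rightarrow>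
    (nat \<Rightarrow> real \<Rightarrow> real) \<Rightarrow> (nat \<Rightarrow> real) \<Rightarrow> (nat \<Rightarrow> real) \<Rightarrow> bool" where
  "fragile_assumption n m R p a k \<longleftrightarrow>
     (\<forall>j<m. (\<forall>t\<ge>0. R j t > 1 \<and> 0 \<le> p j t \<and> p j t \<le> 1)
            \<and> p j 0 = 0 \<and> (\<forall>t\<ge>1. p j t = 1)) \<and>
     (\<forall>i<n. 0 < a i \<and> a i \<le> 1 \<and> k i > 0) \<and>
     (\<forall>i<n. \<forall>j<m.
        continuous_on {0..1} (eff_rate R p a k i j) \<and>
        (\<exists>F' F''. \<forall>t\<in>{0<..<1}.
            (eff_rate R p a k i j has_real_derivative F' t) (at t) \<and>
            (F' has_real_derivative F'' t) (at t) \<and> F' t < 0 \<and> F'' t < 0))"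

definition omega :: "(nat \<Rightarrow> real \<Rightarrow> real) \<Rightarrow> (nat \<Rightarrow> real \<Rightarrow> real) \<Rightarrow>
    (nat \<Rightarrow> real) \<Rightarrow> (nat \<Rightarrow> real) \<Rightarrow> nat \<Rightarrow> nat \<Rightarrow> real" where
  "omega R p a k i j = (THE w. 0 < w \<and> w < 1 \<and> eff_rate R p a k i j w = 0)"

definition simplex_C :: "nat \<Rightarrow> (nat \<Rightarrow> real) set" where
  "simplex_C m = {y. (\<forall>j<m. 0 \<le> y j \<and> y j \<le> 1) \<and> (\<Sum>j<m. y j) \<le> 1}"

definition others_total :: "nat \<Rightarrow> (nat \<Rightarrow> nat \<Rightarrow> real) \<Rightarrow> nat \<Rightarrow> nat \<Rightarrow> real" where
  "others_total n x i j = (\<Sum>l\<in>{..<n} - {i}. x l j)"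

definition active_cprs :: "nat \<Rightarrow> nat \<Rightarrow> (nat \<Rightarrow> real \<Rightarrow> real) \<Rightarrow> (nat \<Rightarrow> real \<Rightarrow> real) \<Rightarrow>
    (nat \<Rightarrow> real) \<Rightarrow> (nat \<Rightarrow> real) \<Rightarrow> (nat \<Rightarrow> nat \<Rightarrow> real) \<Rightarrow> nat \<Rightarrow> nat set" where
  "active_cprs n m R p a k x i = {j. j < m \<and> others_total n x i j < omega R p a k i j}"

definition constraint_policy :: "nat \<Rightarrow> nat \<Rightarrow> (nat \<Rightarrow> real \<Rightarrow> real) \<Rightarrow> (nat \<Rightarrow> real \<Rightarrow> real) \<Rightarrow>
    (nat \<Rightarrow> real) \<Rightarrow> (nat \<Rightarrow> real) \<Rightarrow> (nat \<Rightarrow> nat \<Rightarrow> real) \<Rightarrow> nat \<Rightarrow> (nat \<Rightarrow> real) set" where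
  "constraint_policy n m R p a k x i = simplex_C m \<inter>
     {y. \<forall>j<m. (j \<in> active_cprs n m R p a k x i \<longrightarrow>
                    0 \<le> y j \<and> y j \<le> omega R p a k i j - others_total n x i j) \<and>
               (j \<notin> active_cprs n m R p a k x i \<longrightarrow> y j = 0)}"

definition utility :: "nat \<Rightarrow> nat \<Rightarrow> (nat \<Rightarrow> real \<Rightarrow> real) \<Rightarrow> (nat \<Rightarrow> real \<Rightarrow> real) \<Rightarrow>
    (nat \<Rightarrow> real) \<Rightarrow> (nat \<Rightarrow> real) \<Rightarrow> nat \<Rightarrow> (nat \<Rightarrow> real) \<Rightarrow> (nat \<Rightarrow> nat \<Rightarrow> real) \<Rightarrow> real" where
  "utility n m R p a k i y x =
     (\<Sum>j<m. (y j) powr (a i) * eff_rate R p a k i j (y j + others_total n x i j))"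

definition is_GNE :: "nat \<Rightarrow> nat \<Rightarrow> (nat \<Rightarrow> real \<Rightarrow> real) \<Rightarrow> (nat \<Rightarrow> real \<Rightarrow> real) \<Rightarrow>
    (nat \<Rightarrow> real) \<Rightarrow> (nat \<Rightarrow> real) \<Rightarrow> (nat \<Rightarrow> nat \<Rightarrow> real) \<Rightarrow> bool" where
  "is_GNE n m R p a k x \<longleftrightarrow>
     (\<forall>i<n. x i \<in> simplex_C m) \<and>
     (\<forall>i<n. x i \<in> constraint_policy n m R p a k x i \<and>
        (\<forall>y\<in>constraint_policy n m R p a k x i.
            utility n m R p a k i (x i) x \<ge> utility n m R p a k i y x))"

end

theory Submission
  imports Defs
begin

context
  fixes F Fd Fdd :: "real \<Rightarrow> real"
  assumes cont: "continuous_on {0..1} F"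
    and der1: "\<And>t. 0 < t \<Longrightarrow> t < 1 \<Longrightarrow> (F has_real_derivative Fd t) (at t)"
    and der2: "\<And>t. 0 < t \<Longrightarrow> t < 1 \<Longrightarrow> (Fd has_real_derivative Fdd t) (at t)"
    and neg1: "\<And>t. 0 < t \<Longrightarrow> t < 1 \<Longrightarrow> Fd t < 0"
    and neg2: "\<And>t. 0 < t \<Longrightarrow> t < 1 \<Longrightarrow> Fdd t < 0"
begin

lemma F_dec: assumes "0 \<le> x" "x < y" "y \<le> 1" shows "F y < F x"
proof (rule DERIV_neg_imp_decreasing_open[OF assms(2)])
  fix t assume "x < t" "t < y"
  then have "0 < t" "t < 1" using assms by linarith+
  then show "\<exists>d. DERIV F t :> d \<and> d < 0" using der1 neg1 by blast
next
  show "continuous_on {x..y} F" using assms by (intro continuous_on_subset[OF cont]) auto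
qed

lemma Fd_dec: assumes "0 < x" "x < y" "y < 1" shows "Fd y < Fd x"
proof (rule DERIV_neg_imp_decreasing[OF assms(2)])
  fix t assume "x \<le> t" "t \<le> y"
  then have "0 < t" "t < 1" using assms by linarith+
  then show "\<exists>d. DERIV Fd t :> d \<and> d < 0" using der2 neg2 by blast
qed

lemma Fd_cont: "continuous_on {0<..<1} Fd"
  by (rule continuous_at_imp_continuous_on) (metis DERIV_isCont der2 greaterThanLessThan_iff)

lemma F_cont_at: "0 < t \<Longrightarrow> t < 1 \<Longrightarrow> isCont F t"
  using der1 DERIV_isCont by blast

lemma unique_zero: assumes "F 0 > 0" "F 1 < 0"
  shows "\<exists>!w. 0 < w \<and> w < 1 \<and> F w = 0"
proof -
  obtain w where w: "0 \<le> w" "w \<le> 1" "F w = 0"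
    using IVT2'[of F 1 0 0] assms cont by auto
  have "w \<noteq> 0" "w \<noteq> 1" using w assms by auto
  with w have "0 < w \<and> w < 1 \<and> F w = 0" by auto
  moreover have "v = w" if "0 < v \<and> v < 1 \<and> F v = 0" for v
  proof (rule ccontr)
    assume "v \<noteq> w"
    then consider "v < w" | "w < v" by linarith
    then show False
    proof cases
      case 1 then have "F w < F v" using F_dec[of v w] that w by auto
      then show False using that w by auto
    next
      case 2 then have "F v < F w" using F_dec[of w v] that w by auto
      then show False using that w by auto
    qed
  qed
  ultimately show ?thesis by blast
qed

lemma F_shift_deriv: "0 < z + s \<Longrightarrow> z + s < 1 \<Longrightarrow> ((\<lambda>z. F (z + s)) has_real_derivative Fd (z + s)) (at z)"
  using der1 DERIV_shift by blast

lemma Fd_shift_deriv: "0 < z + s \<Longrightarrow> z + s < 1 \<Longrightarrow> ((\<lambda>z. Fd (z + s)) has_real_derivative Fdd (z + s)) (at z)"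
  using der2 DERIV_shift by blast

lemma psi_deriv:
  assumes "0 < z + s" "z + s < 1"
  shows "((\<lambda>z. a * F (z + s) + z * Fd (z + s)) has_real_derivative
            (a * Fd (z + s) + (Fd (z + s) + z * Fdd (z + s)))) (at z)"
proof -
  have "((\<lambda>z. a * F (z + s) + z * Fd (z + s)) has_real_derivative
            (a * Fd (z + s) + (1 * Fd (z + s) + Fdd (z + s) * z))) (at z)"
    by (intro DERIV_add DERIV_cmult DERIV_mult DERIV_ident F_shift_deriv Fd_shift_deriv assms)
  then show ?thesis by (simp add: algebra_simps)
qed

lemma psi_dec:
  assumes "0 < a" "0 \<le> s" "0 < z1" "z1 < z2" "z2 + s < 1"
  shows "a * F (z2 + s) + z2 * Fd (z2 + s) < a * F (z1 + s) + z1 * Fd (z1 + s)"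
proof (rule DERIV_neg_imp_decreasing[OF assms(4)])
  fix t assume t: "z1 \<le> t" "t \<le> z2"
  then have t1: "0 < t + s" "t + s < 1" "0 < t" using assms by linarith+
  have "a * Fd (t + s) < 0" using neg1[OF t1(1,2)] assms(1) by (simp add: mult_pos_neg)
  moreover have "t * Fdd (t + s) < 0" using neg2[OF t1(1,2)] t1(3) by (simp add: mult_pos_neg)
  moreover have "Fd (t + s) < 0" using neg1[OF t1(1,2)] .
  ultimately have "a * Fd (t + s) + (Fd (t + s) + t * Fdd (t + s)) < 0" by linarith
  then show "\<exists>y. DERIV (\<lambda>z. a * F (z + s) + z * Fd (z + s)) t :> y \<and> y < 0"
    using psi_deriv[OF t1(1,2)] by blast
qed

lemma h_deriv:
  assumes "0 < z" "0 \<le> s" "z + s < 1"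
  shows "((\<lambda>z. z powr a * F (z + s)) has_real_derivative
           (z powr a / z) * (a * F (z + s) + z * Fd (z + s))) (at z)"
proof -
  have "((\<lambda>z. z powr a * F (z + s)) has_real_derivative
           (a * z powr (a - 1)) * F (z + s) + Fd (z + s) * z powr a) (at z)"
    using assms by (intro DERIV_mult has_real_derivative_powr F_shift_deriv) auto
  moreover have "z powr (a - 1) = z powr a / z" using assms by (simp add: powr_diff)
  ultimately show ?thesis using assms by (simp add: field_simps)
qed

context
  fixes w :: real
  assumes w0: "0 < w" and w1: "w < 1" and Fw: "F w = 0"
begin

lemma F_pos: "0 \<le> t \<Longrightarrow> t < w \<Longrightarrow> 0 < F t"
  using F_dec[of t w] w1 Fw by auto

lemma F_neg: "w < t \<Longrightarrow> t \<le> 1 \<Longrightarrow> F t < 0"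
  using F_dec[of w t] w0 Fw by auto

lemma phi_nonpos_arg:
  assumes "w \<le> t" "t < 1" "0 < a"
  shows "- a * F t / Fd t \<le> 0"
proof -
  have "F t \<le> 0" using assms F_neg[of t] Fw by (cases "w = t") auto
  moreover have "Fd t < 0" using neg1 assms w0 by auto
  moreover have "a * F t \<le> 0" using calculation assms by (simp add: mult_nonneg_nonpos)
  ultimately have "0 \<le> a * F t / Fd t" by (intro divide_nonpos_neg)
  then show ?thesis by simp
qed

lemma phi_zero: "w \<le> t \<Longrightarrow> t < 1 \<Longrightarrow> 0 < a \<Longrightarrow> max 0 (- a * F t / Fd t) = 0"
  using phi_nonpos_arg by simp

lemma phi_pos_arg:
  assumes "0 < t" "t < w" "0 < a"
  shows "0 < - a * F t / Fd t"
proof -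
  have "F t > 0" using assms F_pos by auto
  moreover have "Fd t < 0" using neg1 assms w1 by auto
  moreover have "a * F t > 0" using calculation assms by simp
  ultimately have "a * F t / Fd t < 0" by (intro divide_pos_neg)
  then show ?thesis by simp
qed

lemma phi_anti:
  assumes "0 < x" "x \<le> y" "y < 1" "0 < a"
  shows "max 0 (- a * F y / Fd y) \<le> max 0 (- a * F x / Fd x)"
proof (cases "x = y")
  case False
  then have xy: "x < y" using assms by auto
  show ?thesis
  proof (cases "F y \<le> 0")
    case True
    have "Fd y < 0" using neg1 assms by auto
    moreover have "a * F y \<le> 0" using True assms by (simp add: mult_nonneg_nonpos)
    ultimately have "0 \<le> a * F y / Fd y" by (intro divide_nonpos_neg)
    then have "- a * F y / Fd y \<le> 0" by simp
    then show ?thesis by simp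
  next
    case False
    have Fx: "F y < F x" using F_dec[of x y] assms xy by auto
    have d: "Fd y < Fd x" using Fd_dec[of x y] assms xy by auto
    have dx: "Fd x < 0" using neg1 assms xy by auto
    have e1: "- a * F y / Fd y = (a * F y) / (- Fd y)" by simp
    have e2: "- a * F x / Fd x = (a * F x) / (- Fd x)" by simp
    have "(a * F y) / (- Fd y) \<le> (a * F x) / (- Fd x)"
      by (rule frac_le) (use False Fx d dx assms in auto)
    then show ?thesis using e1 e2 by linarith
  qed
qed simp

lemma phi_cont:
  assumes "0 < e" "b < 1"
  shows "continuous_on {e..b} (\<lambda>t. max 0 (- a * F t / Fd t))"
proof -
  have cF: "continuous_on {e..b} F" by (rule continuous_on_subset[OF cont]) (use assms in auto)
  have cFd: "continuous_on {e..b} Fd" by (rule continuous_on_subset[OF Fd_cont]) (use assms in auto)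
  have nz: "\<forall>t\<in>{e..b}. Fd t \<noteq> 0"
  proof
    fix t assume "t \<in> {e..b}"
    then have "0 < t" "t < 1" using assms by auto
    then show "Fd t \<noteq> 0" using neg1[of t] by linarith
  qed
  show ?thesis by (intro continuous_intros cF cFd nz)
qed

lemma h_cont:
  assumes "0 < a" "0 \<le> s"
  shows "continuous_on {0..w-s} (\<lambda>z. z powr a * F (z + s))"
proof -
  have c1: "continuous_on {0..w-s} (\<lambda>z. F (z + s))"
    by (rule continuous_on_compose2[OF cont]) (use assms w1 in \<open>auto intro!: continuous_intros\<close>)
  have c2: "continuous_on {0..w-s} (\<lambda>z. z powr a)"
    by (rule continuous_on_powr'[of _ "\<lambda>z. z" "\<lambda>z. a"]) (use assms in \<open>auto intro: continuous_intros\<close>)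
  show ?thesis by (intro continuous_intros c1 c2)
qed

lemma br_suff:
  assumes a: "0 < a" and s: "0 \<le> s" and v: "0 < v" "v \<le> w - s"
    and foc: "a * F (v + s) + v * Fd (v + s) = 0" and z: "0 \<le> z" "z \<le> w - s"
  shows "z powr a * F (z + s) \<le> v powr a * F (v + s)"
proof -
  have hc: "continuous_on {0..w-s} (\<lambda>z. z powr a * F (z + s))" by (rule h_cont[OF a s])
  consider "z < v" | "z = v" | "v < z" by linarith
  then show ?thesis
  proof cases
    case 1
    have "z powr a * F (z + s) < v powr a * F (v + s)"
    proof (rule DERIV_pos_imp_increasing_open[OF 1])
      fix t assume t: "z < t" "t < v"
      then have t1: "0 < t" "t + s < 1" using z v w1 by linarith+
      have "a * F (v + s) + v * Fd (v + s) < a * F (t + s) + t * Fd (t + s)"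
        by (rule psi_dec) (use a s t1 t v w1 in auto)
      then have "0 < a * F (t + s) + t * Fd (t + s)" using foc by linarith
      moreover have "0 < t powr a / t" using t1 by simp
      ultimately have "0 < (t powr a / t) * (a * F (t + s) + t * Fd (t + s))" by (rule mult_pos_pos[rotated])
      then show "\<exists>y. ((\<lambda>z. z powr a * F (z + s)) has_real_derivative y) (at t) \<and> 0 < y"
        using h_deriv[OF t1(1) s t1(2)] by blast
    next
      show "continuous_on {z..v} (\<lambda>z. z powr a * F (z + s))"
        by (rule continuous_on_subset[OF hc]) (use z v in auto)
    qed
    then show ?thesis by simp
  next
    case 2 then show ?thesis by simp
  next
    case 3
    have "z powr a * F (z + s) < v powr a * F (v + s)"
    proof (rule DERIV_neg_imp_decreasing_open[OF 3])
      fix t assume t: "v < t" "t < z"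
      then have t1: "0 < t" "t + s < 1" using z v w1 by linarith+
      have "a * F (t + s) + t * Fd (t + s) < a * F (v + s) + v * Fd (v + s)"
        by (rule psi_dec) (use a s t1 t v w1 in auto)
      then have "a * F (t + s) + t * Fd (t + s) < 0" using foc by linarith
      moreover have "0 < t powr a / t" using t1 by simp
      ultimately have "(t powr a / t) * (a * F (t + s) + t * Fd (t + s)) < 0"
        by (rule mult_pos_neg[rotated])
      then show "\<exists>y. ((\<lambda>z. z powr a * F (z + s)) has_real_derivative y) (at t) \<and> y < 0"
        using h_deriv[OF t1(1) s t1(2)] by blast
    next
      show "continuous_on {v..z} (\<lambda>z. z powr a * F (z + s))"
        by (rule continuous_on_subset[OF hc]) (use z v in auto)
    qed
    then show ?thesis by simp
  qed
qed

lemma br_nec: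
  assumes a: "0 < a" and s: "0 \<le> s" "s < w" and v: "0 \<le> v" "v \<le> w - s"
    and max: "\<And>z. 0 \<le> z \<Longrightarrow> z \<le> w - s \<Longrightarrow> z powr a * F (z + s) \<le> v powr a * F (v + s)"
  shows "0 < v \<and> a * F (v + s) + v * Fd (v + s) = 0"
proof -
  define z0 where "z0 = (w - s) / 2"
  have z0: "0 < z0" "z0 < w - s" using s by (auto simp: z0_def)
  have "0 < z0 powr a * F (z0 + s)" using z0 F_pos[of "z0 + s"] s by simp
  also have "\<dots> \<le> v powr a * F (v + s)" using max z0 by simp
  finally have hv: "0 < v powr a * F (v + s)" .
  have "v \<noteq> 0" using hv by auto
  moreover have "v \<noteq> w - s" using hv Fw by auto
  ultimately have v1: "0 < v" "v < w - s" using v by auto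
  have vs: "v + s < 1" using v1 w1 by linarith
  have "(v powr a / v) * (a * F (v + s) + v * Fd (v + s)) = 0"
  proof (rule DERIV_local_max[OF h_deriv[OF v1(1) s(1) vs]])
    show "0 < min v (w - s - v)" using v1 by simp
    show "\<forall>y. \<bar>v - y\<bar> < min v (w - s - v) \<longrightarrow> y powr a * F (y + s) \<le> v powr a * F (v + s)"
      using max by (auto simp: abs_if split: if_splits)
  qed
  moreover have "0 < v powr a / v" using v1 by simp
  ultimately show ?thesis using v1 by simp
qed

end

end


lemma simplex1: "y \<in> simplex_C 1 \<longleftrightarrow> 0 \<le> y 0 \<and> y 0 \<le> 1"
  by (simp add: simplex_C_def lessThan_Suc)
lemma cp1: "y \<in> constraint_policy n 1 R p a k x i \<longleftrightarrow> 0 \<le> y 0 \<and> y 0 \<le> 1 \<and>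
   (others_total n x i 0 < omega R p a k i 0 \<longrightarrow> y 0 \<le> omega R p a k i 0 - others_total n x i 0) \<and>
   (\<not> others_total n x i 0 < omega R p a k i 0 \<longrightarrow> y 0 = 0)"
  by (auto simp add: constraint_policy_def simplex_C_def lessThan_Suc active_cprs_def)
lemma util1: "utility n 1 R p a k i y x = y 0 powr a i * eff_rate R p a k i 0 (y 0 + others_total n x i 0)"
  by (simp add: utility_def)
lemma gne1: "is_GNE n 1 R p a k x \<longleftrightarrow> (\<forall>i<n. 0 \<le> x i 0 \<and> x i 0 \<le> 1 \<and> x i \<in> constraint_policy n 1 R p a k x i \<and>
        (\<forall>y\<in>constraint_policy n 1 R p a k x i. utility n 1 R p a k i y x \<le> utility n 1 R p a k i (x i) x))"
  by (auto simp add: is_GNE_def simplex_C_def lessThan_Suc)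
lemma others_sum: "i < n \<Longrightarrow> others_total n x i j = (\<Sum>l<n. x l j) - x i j"
  unfolding others_total_def by (simp add: sum_diff1)

lemmas cp1s = cp1[unfolded One_nat_def]
lemmas util1s = util1[unfolded One_nat_def]
lemmas gne1s = gne1[unfolded One_nat_def]

theorem theorem3:
  fixes n :: nat and R p :: "nat \<Rightarrow> real \<Rightarrow> real" and a k :: "nat \<Rightarrow> real"
  assumes "n \<ge> 1"
    and "fragile_assumption n 1 R p a k"
  shows "\<exists>x. is_GNE n 1 R p a k x \<and>
           (\<forall>y. is_GNE n 1 R p a k y \<longrightarrow> (\<forall>i<n. \<forall>j<1. y i j = x i j))"
proof -
  define Fi where "Fi i = eff_rate R p a k i 0" for i
  define w where "w i = omega R p a k i 0" for i
  have A1: "\<forall>t\<ge>0. R 0 t > 1 \<and> 0 \<le> p 0 t \<and> p 0 t \<le> 1" "p 0 0 = 0" "\<forall>t\<ge>1. p 0 t = 1"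
    using assms(2) unfolding fragile_assumption_def by auto
  have A2: "\<And>i. i < n \<Longrightarrow> 0 < a i \<and> a i \<le> 1 \<and> k i > 0"
    using assms(2) unfolding fragile_assumption_def by auto
  have cont: "\<And>i. i < n \<Longrightarrow> continuous_on {0..1} (Fi i)"
    using assms(2) unfolding fragile_assumption_def Fi_def by auto
  have "\<forall>i. \<exists>F'. \<exists>F''. i < n \<longrightarrow> (\<forall>t\<in>{0<..<1}.
            (Fi i has_real_derivative F' t) (at t) \<and>
            (F' has_real_derivative F'' t) (at t) \<and> F' t < 0 \<and> F'' t < 0)"
    using assms(2) unfolding fragile_assumption_def Fi_def by auto
  then obtain Fd where "\<forall>i. \<exists>F''. i < n \<longrightarrow> (\<forall>t\<in>{0<..<1}.
            (Fi i has_real_derivative Fd i t) (at t) \<and>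
            (Fd i has_real_derivative F'' t) (at t) \<and> Fd i t < 0 \<and> F'' t < 0)"
    by metis
  then obtain Fdd where D: "\<forall>i. i < n \<longrightarrow> (\<forall>t\<in>{0<..<1}.
            (Fi i has_real_derivative Fd i t) (at t) \<and>
            (Fd i has_real_derivative Fdd i t) (at t) \<and> Fd i t < 0 \<and> Fdd i t < 0)"
    by metis
  have d1: "\<And>i t. i < n \<Longrightarrow> 0 < t \<Longrightarrow> t < 1 \<Longrightarrow> (Fi i has_real_derivative Fd i t) (at t)"
    using D by auto
  have d2: "\<And>i t. i < n \<Longrightarrow> 0 < t \<Longrightarrow> t < 1 \<Longrightarrow> (Fd i has_real_derivative Fdd i t) (at t)"
    using D by auto
  have n1: "\<And>i t. i < n \<Longrightarrow> 0 < t \<Longrightarrow> t < 1 \<Longrightarrow> Fd i t < 0"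
    using D by auto
  have n2: "\<And>i t. i < n \<Longrightarrow> 0 < t \<Longrightarrow> t < 1 \<Longrightarrow> Fdd i t < 0"
    using D by auto
  have wp: "0 < w i \<and> w i < 1 \<and> Fi i (w i) = 0" if i: "i < n" for i
  proof -
    have "Fi i 0 = (R 0 0 - 1) powr a i" using A1 by (simp add: Fi_def eff_rate_def)
    moreover have "R 0 0 - 1 > 0" using A1 by auto
    ultimately have "Fi i 0 > 0" by simp
    moreover have "Fi i 1 = - k i" using A1 by (simp add: Fi_def eff_rate_def)
    then have "Fi i 1 < 0" using A2[OF i] by simp
    ultimately have ex: "\<exists>!w. 0 < w \<and> w < 1 \<and> Fi i w = 0"
      using unique_zero[OF cont[OF i] d1[OF i] d2[OF i] n1[OF i] n2[OF i]] by blast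
    have "w i = (THE w. 0 < w \<and> w < 1 \<and> Fi i w = 0)"
      by (simp add: w_def omega_def Fi_def)
    then show ?thesis using theI'[OF ex] by simp
  qed
  have w0: "\<And>i. i < n \<Longrightarrow> 0 < w i" and w1: "\<And>i. i < n \<Longrightarrow> w i < 1"
    and Fw: "\<And>i. i < n \<Longrightarrow> Fi i (w i) = 0" using wp by auto
  define phi where "phi i t = max 0 (- a i * Fi i t / Fd i t)" for i t
  note L = cont d1 d2 n1 n2
  have phi_nn: "\<And>i t. 0 \<le> phi i t" by (simp add: phi_def)
  have phi_anti': "phi i y \<le> phi i x" if "i < n" "0 < x" "x \<le> y" "y < 1" for i x y
    unfolding phi_def
    by (rule phi_anti[OF cont[OF that(1)] d1[OF that(1)] d2[OF that(1)] n1[OF that(1)] n2[OF that(1)] w0[OF that(1)] w1[OF that(1)] Fw[OF that(1)]])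
       (use that A2 in auto)
  have phi_zero': "phi i t = 0" if "i < n" "w i \<le> t" "t < 1" for i t
    unfolding phi_def
    by (rule phi_zero[OF cont[OF that(1)] d1[OF that(1)] d2[OF that(1)] n1[OF that(1)] n2[OF that(1)] w0[OF that(1)] w1[OF that(1)] Fw[OF that(1)]]) (use that A2 in auto)
  have phi_pos': "phi i t = - a i * Fi i t / Fd i t \<and> 0 < - a i * Fi i t / Fd i t"
    if "i < n" "0 < t" "t < w i" for i t
    using phi_pos_arg[OF cont[OF that(1)] d1[OF that(1)] d2[OF that(1)] n1[OF that(1)] n2[OF that(1)] w0[OF that(1)] w1[OF that(1)] Fw[OF that(1)], of t "a i"] that A2 unfolding phi_def by auto
  have nec: "0 < (\<Sum>l<n. x l 0) \<and> (\<Sum>l<n. x l 0) < 1 \<and> (\<forall>i<n. x i 0 = phi i (\<Sum>l<n. x l 0))"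
    if G: "is_GNE n 1 R p a k x" for x
  proof -
    define T where "T = (\<Sum>l<n. x l 0)"
    have G': "\<forall>i<n. 0 \<le> x i 0 \<and> x i 0 \<le> 1 \<and> x i \<in> constraint_policy n 1 R p a k x i \<and>
        (\<forall>y\<in>constraint_policy n 1 R p a k x i. utility n 1 R p a k i y x \<le> utility n 1 R p a k i (x i) x)"
      using G gne1 by blast
    have xnn: "\<And>l. l < n \<Longrightarrow> 0 \<le> x l 0" using G' by auto
    have s_eq: "\<And>i. i < n \<Longrightarrow> others_total n x i 0 = T - x i 0" by (simp add: others_sum T_def)
    have s_nn: "\<And>i. 0 \<le> others_total n x i 0"
      unfolding others_total_def by (rule sum_nonneg) (use xnn in auto)
    have case_act: "0 < x i 0 \<and> T < w i \<and> x i 0 = - a i * Fi i T / Fd i T"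
      if i: "i < n" and act: "others_total n x i 0 < w i" for i
    proof -
      let ?s = "others_total n x i 0"
      have xi: "0 \<le> x i 0" "x i 0 \<le> w i - ?s"
        using G' i act by (auto simp: cp1 cp1s w_def)
      have mx: "z powr a i * Fi i (z + ?s) \<le> x i 0 powr a i * Fi i (x i 0 + ?s)"
        if "0 \<le> z" "z \<le> w i - ?s" for z
      proof -
        have "(\<lambda>j. z) \<in> constraint_policy n 1 R p a k x i"
          using that act w1[OF i] s_nn[of i] by (simp add: cp1 cp1s w_def)
        then show ?thesis using G' i by (auto simp: util1 util1s Fi_def)
      qed
      have r: "0 < x i 0 \<and> a i * Fi i (x i 0 + ?s) + x i 0 * Fd i (x i 0 + ?s) = 0"
        by (rule br_nec[OF cont[OF i] d1[OF i] d2[OF i] n1[OF i] n2[OF i] w0[OF i] w1[OF i] Fw[OF i]])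
           (use A2[OF i] s_nn[of i] act xi mx in auto)
      have T: "x i 0 + ?s = T" using s_eq[OF i] by simp
      have Tle: "T \<le> w i" using xi T by linarith
      have T0: "0 < T" using r s_nn[of i] T by linarith
      have Tne: "T \<noteq> w i"
      proof
        assume "T = w i"
        then have "Fi i T = 0" using Fw[OF i] by simp
        then have "a i * Fi i T = 0" by simp
        moreover have "a i * Fi i T + x i 0 * Fd i T = 0" using r T by simp
        ultimately have "x i 0 * Fd i T = 0" by linarith
        moreover have "Fd i T < 0" using n1[OF i T0] Tle w1[OF i] by simp
        ultimately show False using r by simp
      qed
      have Fdnz: "Fd i T \<noteq> 0" using n1[OF i T0] Tle w1[OF i] by simp
      have "x i 0 = - a i * Fi i T / Fd i T"
        using r T Fdnz by (simp add: field_simps)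
      then show ?thesis using r Tle Tne by simp
    qed
    have case_inact: "x i 0 = 0" if i: "i < n" and inact: "\<not> others_total n x i 0 < w i" for i
      using G' i inact by (auto simp: cp1 cp1s w_def)
    have T0: "0 < T"
    proof (rule ccontr)
      assume "\<not> 0 < T"
      then have "T = 0" using sum_nonneg[of "{..<n}" "\<lambda>l. x l 0"] xnn unfolding T_def by force
      then have "x 0 0 = 0" using sum_nonneg_eq_0_iff[of "{..<n}" "\<lambda>l. x l 0"] xnn assms(1)
        unfolding T_def by auto
      then have "others_total n x 0 0 = 0" using s_eq[of 0] assms(1) \<open>T = 0\<close> by simp
      then have "0 < x 0 0" using case_act[of 0] w0[of 0] assms(1) by simp
      then show False using \<open>x 0 0 = 0\<close> by simp
    qed
    obtain i where i: "i < n" "x i 0 \<noteq> 0"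
    proof (rule ccontr)
      assume "\<not> thesis"
      then have "\<forall>i<n. x i 0 = 0" using that by blast
      then have "T = 0" unfolding T_def by simp
      then show False using T0 by simp
    qed
    then have "others_total n x i 0 < w i" using case_inact by blast
    then have "T < w i" using case_act i by blast
    then have T1: "T < 1" using w1[OF i(1)] by simp
    have "x j 0 = phi j T" if j: "j < n" for j
    proof (cases "others_total n x j 0 < w j")
      case True
      then show ?thesis using case_act[OF j True] phi_pos'[OF j T0] by simp
    next
      case False
      then have "w j \<le> T" using s_eq[OF j] case_inact[OF j False] by simp
      then show ?thesis using case_inact[OF j False] phi_zero'[OF j _ T1] by simp
    qed
    then show ?thesis using T0 T1 unfolding T_def by simp
  qed
  have n0: "0 < n" using assms(1) by simp
  define wm where "wm = Max (w ` {..<n})"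
  have wm: "\<And>i. i < n \<Longrightarrow> w i \<le> wm" unfolding wm_def by (rule Max_ge) auto
  have wm1: "wm < 1" unfolding wm_def using w1 n0 by (subst Max_less_iff) auto
  define c where "c = phi 0 (w 0 / 2)"
  have c0: "0 < c" using phi_pos'[OF n0, of "w 0 / 2"] w0[OF n0] unfolding c_def by simp
  define e where "e = min (c / 2) (w 0 / 2)"
  have e0: "0 < e" using c0 w0[OF n0] by (simp add: e_def)
  have ew: "e \<le> w 0 / 2" by (simp add: e_def)
  have ewm: "e \<le> wm" using ew w0[OF n0] wm[OF n0] by linarith
  define Gf where "Gf t = (\<Sum>i<n. phi i t) - t" for t
  have "phi 0 (w 0 / 2) \<le> phi 0 e"
    by (rule phi_anti'[OF n0 e0 ew]) (use w1[OF n0] in simp)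
  moreover have "phi 0 e \<le> (\<Sum>i<n. phi i e)"
    by (rule member_le_sum) (use phi_nn n0 in auto)
  ultimately have Ge: "0 \<le> Gf e" using c0 unfolding Gf_def c_def e_def by linarith
  have Gwm: "Gf wm \<le> 0" using phi_zero'[OF _ wm wm1] e0 ewm unfolding Gf_def by simp
  have Gc: "continuous_on {e..wm} Gf"
  proof -
    have "continuous_on {e..wm} (phi i)" if i: "i < n" for i
      unfolding phi_def
      by (rule phi_cont[OF cont[OF i] d1[OF i] d2[OF i] n1[OF i] n2[OF i] w0[OF i] w1[OF i] Fw[OF i] e0 wm1])
    then show ?thesis unfolding Gf_def by (intro continuous_intros) auto
  qed
  obtain T where T: "e \<le> T" "T \<le> wm" "Gf T = 0"
    using IVT2'[of Gf wm 0 e, OF Gwm Ge ewm Gc] by blast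
  have T0: "0 < T" and T1: "T < 1" using T e0 wm1 by auto
  have Tfix: "(\<Sum>i<n. phi i T) = T" using T(3) unfolding Gf_def by simp
  define x where "x i j = phi i T" for i j :: nat
  have sumx: "(\<Sum>l<n. x l 0) = T" using Tfix by (simp add: x_def)
  have GNE: "is_GNE n 1 R p a k x"
    unfolding gne1
  proof (intro allI impI)
    fix i assume i: "i < n"
    let ?s = "others_total n x i 0"
    have s_eq: "?s = T - phi i T" using others_sum[OF i, of x 0] sumx by (simp add: x_def)
    have s_nn: "0 \<le> ?s" unfolding others_total_def by (rule sum_nonneg) (simp add: x_def phi_nn)
    have le: "phi i T \<le> T" using s_eq s_nn by simp
    have x01: "0 \<le> x i 0" "x i 0 \<le> 1" using phi_nn le T1 by (auto simp: x_def)
    show "0 \<le> x i 0 \<and> x i 0 \<le> 1 \<and> x i \<in> constraint_policy n 1 R p a k x i \<and>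
        (\<forall>y\<in>constraint_policy n 1 R p a k x i. utility n 1 R p a k i y x \<le> utility n 1 R p a k i (x i) x)"
    proof (cases "T < w i")
      case True
      define v where "v = phi i T"
      have v: "v = - a i * Fi i T / Fd i T" "0 < v" using phi_pos'[OF i T0 True] by (auto simp: v_def)
      have act: "?s < w i" using s_eq v True by (simp add: v_def)
      have vs: "v + ?s = T" using s_eq by (simp add: v_def)
      have Fdnz: "Fd i T \<noteq> 0" using n1[OF i T0 T1] by simp
      have foc: "a i * Fi i (v + ?s) + v * Fd i (v + ?s) = 0" using vs v(1) Fdnz by simp
      have vle: "v \<le> w i - ?s" using vs True by simp
      have mem: "x i \<in> constraint_policy n 1 R p a k x i"
        using x01 act vle by (simp add: cp1 cp1s w_def x_def v_def)
      have opt: "utility n 1 R p a k i y x \<le> utility n 1 R p a k i (x i) x"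
        if y: "y \<in> constraint_policy n 1 R p a k x i" for y
      proof -
        have y0: "0 \<le> y 0" "y 0 \<le> w i - ?s" using y act by (auto simp: cp1 cp1s w_def)
        have "y 0 powr a i * Fi i (y 0 + ?s) \<le> v powr a i * Fi i (v + ?s)"
          by (rule br_suff[OF cont[OF i] d1[OF i] d2[OF i] n1[OF i] n2[OF i] w0[OF i] w1[OF i] Fw[OF i]])
             (use A2[OF i] s_nn v vle foc y0 in auto)
        then show ?thesis by (simp add: util1 util1s Fi_def x_def v_def)
      qed
      show ?thesis using x01 mem opt by blast
    next
      case False
      have z: "phi i T = 0" using phi_zero'[OF i _ T1] False by simp
      have inact: "\<not> ?s < w i" using s_eq z False by simp
      have mem: "x i \<in> constraint_policy n 1 R p a k x i"
        using inact z by (simp add: cp1 cp1s w_def x_def)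
      have opt: "utility n 1 R p a k i y x \<le> utility n 1 R p a k i (x i) x"
        if y: "y \<in> constraint_policy n 1 R p a k x i" for y
      proof -
        have "y 0 = 0" using y inact by (auto simp: cp1 cp1s w_def)
        then show ?thesis using z by (simp add: util1 util1s x_def)
      qed
      show ?thesis using x01 mem opt by blast
    qed
  qed
  have uniq: "\<forall>i<n. \<forall>j<1. y i j = x i j" if Y: "is_GNE n 1 R p a k y" for y
  proof -
    define Ty where "Ty = (\<Sum>l<n. y l 0)"
    have Ny: "0 < Ty" "Ty < 1" "\<forall>i<n. y i 0 = phi i Ty" using nec[OF Y] unfolding Ty_def by auto
    have Nx: "0 < T" "T < 1" "\<forall>i<n. x i 0 = phi i T" using nec[OF GNE] sumx by auto
    have fy: "(\<Sum>i<n. phi i Ty) = Ty" using Ny(3) unfolding Ty_def by simp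
    have "Ty = T"
    proof (rule ccontr)
      assume "Ty \<noteq> T"
      then consider "Ty < T" | "T < Ty" by linarith
      then show False
      proof cases
        case 1
        have "(\<Sum>i<n. phi i T) \<le> (\<Sum>i<n. phi i Ty)"
          by (rule sum_mono) (use phi_anti' Ny 1 T1 in auto)
        then show False using Tfix fy 1 by simp
      next
        case 2
        have "(\<Sum>i<n. phi i Ty) \<le> (\<Sum>i<n. phi i T)"
          by (rule sum_mono) (use phi_anti' Ny 2 T0 in auto)
        then show False using Tfix fy 2 by simp
      qed
    qed
    then show ?thesis using Ny(3) Nx(3) by auto
  qed
  show ?thesis using GNE uniq by blast
qed

end
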